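(* Let $G=(V,E)$ be a graph and $\Theta:E\to[0,\pi/2]$. Suppose that $P$ is a disk pattern in $\mathbb{C}$ which realizes $(G,\Theta)$. Then for any $r_2>r_1>0$, $$\mathrm{VEL}(V_{c(r_1)},V_{c(r_2)})\ge\frac{(r_2-r_1)^2}{(32+(8\pi)^2)\,r_2^2}.$$ In particular, if $r_2\ge2r_1$, then $\mathrm{VEL}(V_{c(r_1)},V_{c(r_2)})\ge\frac{1}{128+(16\pi)^2}$.
   Context: $c(r)$ is the circle of radius $r$ centered at $0$, and $V_{c}=V_c(P)=\{v\in V: P(v)\cap c\ne\emptyset\}$. A disk pattern in $\mathbb{C}$ is a collection of closed round disks in $\mathbb{C}$ in which no disk has its boundary contained in the union of two other disks and no disk is the Hausdorff limit of a sequence of distinct disks. Its contact graph has one vertex per disk, with an edge when the disks intersect. The dihedral angle of two intersecting disks $D_1,D_2$ is the angle in $[0,\pi)$ between the clockwise tangent of $\partial D_1$ and the counterclockwise tangent of $\partial D_2$ at a point of $\partial D_1\cap\partial D_2$. Let $\tilde G$ be obtained from $G$ by adding the edge $[v_1,v_3]$ (if not present) whenever $v_0,v_1,v_2,v_3$ form a simple loop with $\Theta([v_{i-1},v_i])=\pi/2$, $i=1,\dots,4$ ($v_4=v_0$), and $\Theta([v_0,v_2])=0$; $\tilde\Theta=\Theta$ on $E$ and $0$ on added edges. $P=\{P(v)\}_{v\in V}$ realizes $(G,\Theta)$ if its contact graph is (via $v\mapsto P(v)$) isomorphic to $\tilde G$ with dihedral angles $\tilde\Theta$. Vertex extremal length: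 a vertex metric is $\eta:V\to[0,\infty)$ with area $\sum_v\eta(v)^2$; a vertex curve $\gamma\subseteq V$ has length $\sum_{v\in\gamma}\eta(v)$. For a family $\Gamma$ of vertex curves, $\eta$ is admissible if every $\gamma\in\Gamma$ has length $\ge1$; $\mathrm{MOD}(\Gamma)$ is the infimum of areas of admissible metrics and $\mathrm{VEL}(\Gamma)=1/\mathrm{MOD}(\Gamma)$ ($+\infty$ if $\Gamma$ is empty). A path in $G$ is a sequence of vertices with consecutive ones adjacent in $G$, identified with its vertex set. For nonvoid $V_1,V_2\subseteq V$, $\mathrm{VEL}(V_1,V_2)$ is the VEL of the family of paths in $G$ joining $V_1$ and $V_2$ (if $V_1$ or $V_2$ is empty the family is empty and the VEL is $+\infty$). *)

theory Defs
  imports "HOL-Analysis.Analysis"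
begin

definition graph :: "'v set \<Rightarrow> 'v set set \<Rightarrow> bool" where
  "graph V E \<longleftrightarrow> (\<forall>e\<in>E. \<exists>u v. u \<in> V \<and> v \<in> V \<and> u \<noteq> v \<and> e = {u, v})"

definition added_edges :: "'v set \<Rightarrow> 'v set set \<Rightarrow> ('v set \<Rightarrow> real) \<Rightarrow> 'v set set" where
  "added_edges V E \<Theta> = {{v1, v3} | v0 v1 v2 v3.
      v0 \<in> V \<and> v1 \<in> V \<and> v2 \<in> V \<and> v3 \<in> V \<and> distinct [v0, v1, v2, v3] \<and>
      {v0, v1} \<in> E \<and> {v1, v2} \<in> E \<and> {v2, v3} \<in> E \<and> {v3, v0} \<in> E \<and>
      \<Theta> {v0, v1} = pi / 2 \<and> \<Theta> {v1, v2} = pi / 2 \<and> \<Theta> {v2, v3} = pi / 2 \<and>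
      \<Theta> {v3, v0} = pi / 2 \<and> {v0, v2} \<in> E \<and> \<Theta> {v0, v2} = 0}"

definition tilde_E :: "'v set \<Rightarrow> 'v set set \<Rightarrow> ('v set \<Rightarrow> real) \<Rightarrow> 'v set set" where
  "tilde_E V E \<Theta> = E \<union> added_edges V E \<Theta>"

definition tilde_Theta :: "'v set set \<Rightarrow> ('v set \<Rightarrow> real) \<Rightarrow> 'v set \<Rightarrow> real" where
  "tilde_Theta E \<Theta> e = (if e \<in> E then \<Theta> e else 0)"

definition round_disk :: "complex set \<Rightarrow> bool" where
  "round_disk D \<longleftrightarrow> (\<exists>c r. r > 0 \<and> D = cball c r)"

definition hausdorff_dist :: "complex set \<Rightarrow> complex set \<Rightarrow> real" where
  "hausdorff_dist A B = max (SUP a\<in>A. infdist a B) (SUP b\<in>B. infdist b A)"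

definition disk_pattern :: "complex set set \<Rightarrow> bool" where
  "disk_pattern \<P> \<longleftrightarrow>
     (\<forall>D\<in>\<P>. round_disk D) \<and>
     (\<forall>D\<in>\<P>. \<forall>D1\<in>\<P> - {D}. \<forall>D2\<in>\<P> - {D}. \<not> frontier D \<subseteq> D1 \<union> D2) \<and>
     (\<forall>D\<in>\<P>. \<not> (\<exists>Ds :: nat \<Rightarrow> complex set. inj Ds \<and> range Ds \<subseteq> \<P> \<and>
                   (\<lambda>n. hausdorff_dist (Ds n) D) \<longlonglongrightarrow> 0))"

definition disk :: "complex \<times> real \<Rightarrow> complex set" where
  "disk cr = cball (fst cr) (snd cr)"

definition vec_angle :: "complex \<Rightarrow> complex \<Rightarrow> real" where
  "vec_angle u w = arccos ((u \<bullet> w) / (norm u * norm w))"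

text \<open>Dihedral angle of disks D1 = disk (c1,r1), D2 = disk (c2,r2): the angle between the
  clockwise tangent of the boundary of D1 and the counterclockwise tangent of the boundary of
  D2 at a point p of the intersection of the boundaries.  The clockwise tangent of the circle
  centered at c1 at p is the direction -i(p-c1), the counterclockwise one of the circle
  centered at c2 is i(p-c2).\<close>
definition dihedral_angle :: "complex \<times> real \<Rightarrow> complex \<times> real \<Rightarrow> real" where
  "dihedral_angle P1 P2 =
     (let p = (SOME p. p \<in> sphere (fst P1) (snd P1) \<inter> sphere (fst P2) (snd P2))
      in vec_angle (- \<i> * (p - fst P1)) (\<i> * (p - fst P2)))"

definition realizes :: "'v set \<Rightarrow> 'v set set \<Rightarrow> ('v set \<Rightarrow> real) \<Rightarrow> ('v \<Rightarrow> complex \<times> real) \<Rightarrow> bool" where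
  "realizes V E \<Theta> P \<longleftrightarrow>
     (\<forall>v\<in>V. snd (P v) > 0) \<and>
     inj_on (\<lambda>v. disk (P v)) V \<and>
     disk_pattern ((\<lambda>v. disk (P v)) ` V) \<and>
     (\<forall>u\<in>V. \<forall>v\<in>V. u \<noteq> v \<longrightarrow>
        ((disk (P u) \<inter> disk (P v) \<noteq> {}) \<longleftrightarrow> {u, v} \<in> tilde_E V E \<Theta>)) \<and>
     (\<forall>u\<in>V. \<forall>v\<in>V. u \<noteq> v \<longrightarrow> {u, v} \<in> tilde_E V E \<Theta> \<longrightarrow>
        sphere (fst (P u)) (snd (P u)) \<inter> sphere (fst (P v)) (snd (P v)) \<noteq> {} \<and>
        dihedral_angle (P u) (P v) = tilde_Theta E \<Theta> {u, v})"

definition V_circ :: "'v set \<Rightarrow> ('v \<Rightarrow> complex \<times> real) \<Rightarrow> real \<Rightarrow> 'v set" where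
  "V_circ V P r = {v \<in> V. disk (P v) \<inter> sphere 0 r \<noteq> {}}"

definition vm_area :: "'v set \<Rightarrow> ('v \<Rightarrow> real) \<Rightarrow> ennreal" where
  "vm_area V \<eta> = (\<Sum>\<^sub>\<infinity>v\<in>V. ennreal ((\<eta> v)\<^sup>2))"

definition vm_length :: "('v \<Rightarrow> real) \<Rightarrow> 'v set \<Rightarrow> ennreal" where
  "vm_length \<eta> \<gamma> = (\<Sum>\<^sub>\<infinity>v\<in>\<gamma>. ennreal (\<eta> v))"

definition MOD :: "'v set \<Rightarrow> 'v set set \<Rightarrow> ennreal" where
  "MOD V \<Gamma> = (INF \<eta>\<in>{\<eta>. (\<forall>v\<in>V. \<eta> v \<ge> 0) \<and> (\<forall>\<gamma>\<in>\<Gamma>. vm_length \<eta> \<gamma> \<ge> 1)}. vm_area V \<eta>)"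

text \<open>VEL = 1/MOD (inverse 0 = top in ennreal; empty family gives MOD = 0, VEL = top).\<close>
definition VEL :: "'v set \<Rightarrow> 'v set set \<Rightarrow> ennreal" where
  "VEL V \<Gamma> = inverse (MOD V \<Gamma>)"

definition joining_paths :: "'v set \<Rightarrow> 'v set set \<Rightarrow> 'v set \<Rightarrow> 'v set \<Rightarrow> 'v set set" where
  "joining_paths V E V1 V2 = {set xs | xs. xs \<noteq> [] \<and> set xs \<subseteq> V \<and>
       (\<forall>i. Suc i < length xs \<longrightarrow> {xs ! i, xs ! Suc i} \<in> E) \<and>
       hd xs \<in> V1 \<and> last xs \<in> V2}"

definition VEL_sets :: "'v set \<Rightarrow> 'v set set \<Rightarrow> 'v set \<Rightarrow> 'v set \<Rightarrow> ennreal" where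
  "VEL_sets V E V1 V2 = VEL V (joining_paths V E V1 V2)"

end

theory Submission
  imports Defs
begin


lemma inner_rot: "((- \<i> * a) \<bullet> (\<i> * b)) = - (a \<bullet> (b::complex))"
  by (simp add: inner_complex_def algebra_simps)

lemma angle_le_imp:
  fixes a b :: complex
  assumes "a \<noteq> 0" "b \<noteq> 0" "vec_angle (- \<i> * a) (\<i> * b) \<le> pi/2"
  shows "a \<bullet> b \<le> 0"
proof (rule ccontr)
  assume "\<not> a \<bullet> b \<le> 0"
  hence pos: "a \<bullet> b > 0" by simp
  define X where "X = ((- \<i> * a) \<bullet> (\<i> * b)) / (norm (- \<i> * a) * norm (\<i> * b))"
  have nn: "norm (- \<i> * a) * norm (\<i> * b) = norm a * norm b" by (simp add: norm_mult)
  have np: "norm a * norm b > 0" using assms by simp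
  have X: "X = - (a \<bullet> b) / (norm a * norm b)" unfolding X_def nn inner_rot by simp
  have "\<bar>a \<bullet> b\<bar> \<le> norm a * norm b" by (rule Cauchy_Schwarz_ineq2)
  hence "- 1 \<le> X" using np unfolding X by (simp add: field_simps)
  moreover have "X < 0" unfolding X using pos np by (simp add: divide_neg_pos)
  ultimately have "arccos 0 < arccos X" by (intro arccos_less_arccos) auto
  hence "pi/2 < arccos X" by simp
  moreover have "vec_angle (- \<i> * a) (\<i> * b) = arccos X" unfolding vec_angle_def X_def ..
  ultimately show False using assms(3) by simp
qed


lemma edge_dist:
  assumes Th: "\<forall>e\<in>E. 0 \<le> \<Theta> e \<and> \<Theta> e \<le> pi / 2"
    and R: "realizes V E \<Theta> P"
    and uv: "u \<in> V" "v \<in> V" "u \<noteq> v" "disk (P u) \<inter> disk (P v) \<noteq> {}"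
  shows "(snd (P u))\<^sup>2 + (snd (P v))\<^sup>2 \<le> (norm (fst (P u) - fst (P v)))\<^sup>2"
proof -
  have e: "{u, v} \<in> tilde_E V E \<Theta>" using R uv unfolding realizes_def by blast
  have sp: "sphere (fst (P u)) (snd (P u)) \<inter> sphere (fst (P v)) (snd (P v)) \<noteq> {}"
    and ang: "dihedral_angle (P u) (P v) = tilde_Theta E \<Theta> {u, v}"
    using R uv e unfolding realizes_def by blast+
  have ru: "snd (P u) > 0" and rv: "snd (P v) > 0" using R uv unfolding realizes_def by auto
  have le: "tilde_Theta E \<Theta> {u, v} \<le> pi/2" using Th by (auto simp: tilde_Theta_def)
  define p where "p = (SOME p. p \<in> sphere (fst (P u)) (snd (P u)) \<inter> sphere (fst (P v)) (snd (P v)))"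
  have p: "p \<in> sphere (fst (P u)) (snd (P u)) \<inter> sphere (fst (P v)) (snd (P v))"
    unfolding p_def using sp by (metis (no_types, lifting) ex_in_conv someI_ex)
  define a where "a = p - fst (P u)"
  define b where "b = p - fst (P v)"
  have na: "norm a = snd (P u)" using p unfolding a_def by (auto simp: dist_norm norm_minus_commute)
  have nb: "norm b = snd (P v)" using p unfolding b_def by (auto simp: dist_norm norm_minus_commute)
  have "vec_angle (- \<i> * a) (\<i> * b) \<le> pi/2"
    using ang le unfolding dihedral_angle_def Let_def p_def[symmetric] a_def b_def by simp
  moreover have "a \<noteq> 0" using na ru by auto
  moreover have "b \<noteq> 0" using nb rv by auto
  ultimately have ab: "a \<bullet> b \<le> 0" using angle_le_imp by blast
  have "fst (P u) - fst (P v) = b - a" unfolding a_def b_def by simp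
  hence "(norm (fst (P u) - fst (P v)))\<^sup>2 = (norm a)\<^sup>2 + (norm b)\<^sup>2 - 2 * (a \<bullet> b)"
    by (simp add: power2_norm_eq_inner inner_diff_left inner_diff_right inner_commute)
  thus ?thesis using ab na nb by simp
qed

fun quad :: "complex \<Rightarrow> nat" where
  "quad z = (if Re z > 0 \<and> Im z \<ge> 0 then 0 else if Re z \<le> 0 \<and> Im z > 0 then 1
     else if Re z < 0 \<and> Im z \<le> 0 then 2 else 3)"

lemma quad_inner:
  assumes "a \<noteq> 0" "b \<noteq> 0" "quad a = quad b"
  shows "a \<bullet> b > 0"
proof -
  have a: "Re a \<noteq> 0 \<or> Im a \<noteq> 0" and b: "Re b \<noteq> 0 \<or> Im b \<noteq> 0" using assms complex_eqI by auto
  have i: "a \<bullet> b = Re a * Re b + Im a * Im b" by (simp add: inner_complex_def)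
  consider "Re a > 0 \<and> Im a \<ge> 0" | "\<not>(Re a > 0 \<and> Im a \<ge> 0) \<and> Re a \<le> 0 \<and> Im a > 0"
    | "\<not>(Re a > 0 \<and> Im a \<ge> 0) \<and> \<not>(Re a \<le> 0 \<and> Im a > 0) \<and> Re a < 0 \<and> Im a \<le> 0"
    | "\<not>(Re a > 0 \<and> Im a \<ge> 0) \<and> \<not>(Re a \<le> 0 \<and> Im a > 0) \<and> \<not>(Re a < 0 \<and> Im a \<le> 0)" by blast
  then show ?thesis
  proof cases
    case 1
    hence "Re b > 0 \<and> Im b \<ge> 0" using assms(3) by (auto split: if_splits)
    thus ?thesis using 1 unfolding i by (smt (verit) mult_pos_pos mult_nonneg_nonneg)
  next
    case 2
    hence "Re b \<le> 0 \<and> Im b > 0" using assms(3) by (auto split: if_splits)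
    thus ?thesis using 2 unfolding i by (smt (verit) mult_pos_pos mult_nonpos_nonpos)
  next
    case 3
    hence "Re b < 0 \<and> Im b \<le> 0" using assms(3) by (auto split: if_splits)
    thus ?thesis using 3 unfolding i by (smt (verit) mult_neg_neg mult_nonpos_nonpos)
  next
    case 4
    hence a4: "Re a \<ge> 0 \<and> Im a < 0" using a by auto
    have "quad a = 3" using 4 by simp
    hence "\<not>(Re b > 0 \<and> Im b \<ge> 0) \<and> \<not>(Re b \<le> 0 \<and> Im b > 0) \<and> \<not>(Re b < 0 \<and> Im b \<le> 0)"
      using assms(3) by (auto split: if_splits)
    hence "Re b \<ge> 0 \<and> Im b < 0" using b by auto
    thus ?thesis using a4 unfolding i by (smt (verit) mult_neg_neg mult_nonneg_nonneg)
  qed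
qed

lemma multiplicity:
  assumes Th: "\<forall>e\<in>E. 0 \<le> \<Theta> e \<and> \<Theta> e \<le> pi / 2"
    and R: "realizes V E \<Theta> P" and F: "F \<subseteq> V"
  shows "card {v\<in>F. x \<in> disk (P v)} \<le> 4"
proof -
  let ?A = "{v\<in>F. x \<in> disk (P v)}"
  let ?g = "\<lambda>v. quad (fst (P v) - x)"
  have "inj_on ?g ?A"
  proof (rule inj_onI, rule ccontr)
    fix u v assume u: "u \<in> ?A" and v: "v \<in> ?A" and eq: "?g u = ?g v" and ne: "u \<noteq> v"
    define a where "a = fst (P u) - x"
    define b where "b = fst (P v) - x"
    have ru: "snd (P u) > 0" and rv: "snd (P v) > 0" using R u v F unfolding realizes_def by auto
    have na: "norm a \<le> snd (P u)" using u unfolding a_def disk_def by (auto simp: dist_norm)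
    have nb: "norm b \<le> snd (P v)" using v unfolding b_def disk_def by (auto simp: dist_norm norm_minus_commute)
    have "disk (P u) \<inter> disk (P v) \<noteq> {}" using u v by auto
    hence d: "(snd (P u))\<^sup>2 + (snd (P v))\<^sup>2 \<le> (norm (a - b))\<^sup>2"
      using edge_dist[OF Th R] u v F ne unfolding a_def b_def by auto
    have e: "(norm (a - b))\<^sup>2 = (norm a)\<^sup>2 + (norm b)\<^sup>2 - 2 * (a \<bullet> b)"
      by (simp add: power2_norm_eq_inner inner_diff_left inner_diff_right inner_commute)
    have sa: "(norm a)\<^sup>2 \<le> (snd (P u))\<^sup>2" using na by (simp add: power_mono)
    have sb: "(norm b)\<^sup>2 \<le> (snd (P v))\<^sup>2" using nb by (simp add: power_mono)
    have "a \<noteq> 0"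
    proof
      assume "a = 0"
      hence "(snd (P u))\<^sup>2 + (snd (P v))\<^sup>2 \<le> (norm b)\<^sup>2" using d by simp
      moreover have "(snd (P u))\<^sup>2 > 0" using ru by simp
      ultimately show False using sb by linarith
    qed
    moreover have "b \<noteq> 0"
    proof
      assume "b = 0"
      hence "(snd (P u))\<^sup>2 + (snd (P v))\<^sup>2 \<le> (norm a)\<^sup>2" using d by simp
      moreover have "(snd (P v))\<^sup>2 > 0" using rv by simp
      ultimately show False using sa by linarith
    qed
    ultimately have "a \<bullet> b > 0" using quad_inner eq unfolding a_def b_def by blast
    thus False using d e sa sb by linarith
  qed
  moreover have "?g ` ?A \<subseteq> {0..<4}" by auto
  ultimately have "card ?A \<le> card {0..<(4::nat)}"
    by (intro card_inj_on_le[of ?g]) auto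
  thus ?thesis by simp
qed


lemma area_bound:
  fixes S :: "'a \<Rightarrow> complex set"
  assumes fin: "finite F" and sub: "\<And>v. v \<in> F \<Longrightarrow> S v \<subseteq> cball 0 R"
    and cl: "\<And>v. v \<in> F \<Longrightarrow> closed (S v)"
    and mult: "\<And>x. card {v\<in>F. x \<in> S v} \<le> 4"
  shows "(\<Sum>v\<in>F. emeasure lborel (S v)) \<le> 4 * emeasure lborel (cball (0::complex) R)"
proof -
  have meas: "S v \<in> sets lborel" if "v \<in> F" for v using cl[OF that] by (simp add: borel_closed)
  have "(\<Sum>v\<in>F. emeasure lborel (S v)) = (\<Sum>v\<in>F. \<integral>\<^sup>+ x. indicator (S v) x \<partial>lborel)"
    using meas by simp
  also have "\<dots> = (\<integral>\<^sup>+ x. (\<Sum>v\<in>F. indicator (S v) x) \<partial>lborel)"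
    by (rule nn_integral_sum[symmetric]) (use meas in auto)
  also have "\<dots> \<le> (\<integral>\<^sup>+ x. 4 * indicator (cball (0::complex) R) x \<partial>lborel)"
  proof -
   have pw: "(\<Sum>v\<in>F. indicator (S v) x) \<le> (4::ennreal) * indicator (cball 0 R) x" for x :: complex
   proof -
    have "(\<Sum>v\<in>F. indicator (S v) x :: ennreal) = (\<Sum>v\<in>F. if x \<in> S v then 1 else 0)"
      by (intro sum.cong) (auto simp: indicator_def)
    also have "\<dots> = (\<Sum>v\<in>{v\<in>F. x \<in> S v}. 1)" by (rule sum.inter_filter[OF fin, symmetric])
    also have "\<dots> = of_nat (card {v\<in>F. x \<in> S v})" by simp
    finally have eq: "(\<Sum>v\<in>F. indicator (S v) x :: ennreal) = of_nat (card {v\<in>F. x \<in> S v})" .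
    show "(\<Sum>v\<in>F. indicator (S v) x) \<le> (4::ennreal) * indicator (cball 0 R) x"
    proof (cases "x \<in> cball 0 R")
      case True
      have "(of_nat (card {v\<in>F. x \<in> S v}) :: ennreal) \<le> of_nat 4" using mult[of x] by (simp only: of_nat_le_iff)
      thus ?thesis using True eq by simp
    next
      case False
      hence "{v\<in>F. x \<in> S v} = {}" using sub by blast
      thus ?thesis using eq by simp
    qed
   qed
   show ?thesis using pw by (intro nn_integral_mono) blast
  qed
  also have "\<dots> = 4 * emeasure lborel (cball (0::complex) R)"
    by (rule nn_integral_cmult_indicator) simp
  finally show ?thesis .
qed

lemma emeasure_cball_complex: "r \<ge> 0 \<Longrightarrow> emeasure lborel (cball (c::complex) r) = ennreal (pi * r\<^sup>2)"
proof -
  assume r: "r \<ge> 0"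
  have u: "unit_ball_vol 2 = pi"
    using unit_ball_vol_numeral(1)[of Num.One] by simp
  show ?thesis using emeasure_cball[OF r, where c=c] u by simp
qed

lemma cover_len:
  fixes a b :: "'a \<Rightarrow> real"
  assumes fin: "finite T" and r: "r1 \<le> r2" and cov: "{r1..r2} \<subseteq> (\<Union>v\<in>T. {a v .. b v})"
    and ab: "\<And>v. v \<in> T \<Longrightarrow> a v \<le> b v"
  shows "r2 - r1 \<le> (\<Sum>v\<in>T. b v - a v)"
proof -
  have "ennreal (r2 - r1) = emeasure lborel {r1..r2}" using r by simp
  also have "\<dots> \<le> emeasure lborel (\<Union>v\<in>T. {a v .. b v})" using fin by (intro emeasure_mono[OF cov] sets.finite_UN) auto
  also have "\<dots> \<le> (\<Sum>v\<in>T. emeasure lborel {a v .. b v})"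
    by (rule emeasure_subadditive_finite[OF fin]) auto
  also have "\<dots> = (\<Sum>v\<in>T. ennreal (b v - a v))" using ab by (intro sum.cong) auto
  also have "\<dots> = ennreal (\<Sum>v\<in>T. b v - a v)" using ab by (intro sum_ennreal) auto
  finally show ?thesis
    by (subst (asm) ennreal_le_iff) (use ab in \<open>auto intro: sum_nonneg\<close>)
qed

lemma chain_connected:
  assumes "xs \<noteq> []" "\<forall>i. Suc i < length xs \<longrightarrow> D (xs!i) \<inter> D (xs ! Suc i) \<noteq> {}"
    "\<forall>v\<in>set xs. connected (D v)"
  shows "connected (\<Union>v\<in>set xs. D v)"
  using assms
proof (induction xs)
  case Nil
  then show ?case by simp
next
  case (Cons x xs)
  show ?case
  proof (cases "xs = []")
    case True
    then show ?thesis using Cons by simp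
  next
    case False
    have ih: "connected (\<Union>v\<in>set xs. D v)"
    proof (rule Cons.IH[OF False])
      show "\<forall>i. Suc i < length xs \<longrightarrow> D (xs ! i) \<inter> D (xs ! Suc i) \<noteq> {}"
      proof (intro allI impI)
        fix i assume "Suc i < length xs"
        thus "D (xs ! i) \<inter> D (xs ! Suc i) \<noteq> {}" using Cons.prems(2) by (metis Suc_less_eq length_Cons nth_Cons_Suc)
      qed
      show "\<forall>v\<in>set xs. connected (D v)" using Cons.prems(3) by simp
    qed
    have "D x \<inter> D (xs ! 0) \<noteq> {}" using Cons.prems(2) False by (metis length_Cons length_greater_0_conv nth_Cons_0 nth_Cons_Suc Suc_less_eq)
    moreover have "xs ! 0 \<in> set xs" using False by simp
    ultimately have "D x \<inter> (\<Union>v\<in>set xs. D v) \<noteq> {}" by blast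
    hence "connected (D x \<union> (\<Union>v\<in>set xs. D v))"
      using ih Cons.prems(3) by (intro connected_Un) auto
    thus ?thesis by simp
  qed
qed


lemma VEL_ge:
  assumes "MOD V \<Gamma> \<le> ennreal M" "M > 0"
  shows "ennreal (1 / M) \<le> VEL V \<Gamma>"
proof -
  have "MOD V \<Gamma> < top" using assms(1) by (metis ennreal_less_top le_less_trans order_le_less_trans top.not_eq_extremum)
  then obtain m where m: "MOD V \<Gamma> = ennreal m" "m \<ge> 0" by (cases "MOD V \<Gamma>" rule: ennreal_cases) auto
  show ?thesis
  proof (cases "m = 0")
    case True
    thus ?thesis using m by (simp add: VEL_def)
  next
    case False
    hence mp: "m > 0" using m by simp
    have "m \<le> M" using m assms by (simp add: ennreal_le_iff)
    hence "1 / M \<le> 1 / m" using mp by (simp add: frac_le)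
    thus ?thesis using m mp unfolding VEL_def by (simp add: inverse_ennreal ennreal_leI divide_inverse)
  qed
qed

lemma MOD_le:
  assumes "\<forall>v\<in>V. \<eta> v \<ge> 0" "\<forall>\<gamma>\<in>\<Gamma>. vm_length \<eta> \<gamma> \<ge> 1"
  shows "MOD V \<Gamma> \<le> vm_area V \<eta>"
  unfolding MOD_def using assms by (intro INF_lower) auto



definition Vrel :: "'v set \<Rightarrow> ('v \<Rightarrow> complex \<times> real) \<Rightarrow> real \<Rightarrow> real \<Rightarrow> 'v set" where
  "Vrel V P r1 r2 = {v\<in>V. \<exists>z\<in>disk (P v). r1 \<le> norm z \<and> norm z \<le> r2}"

definition eta :: "'v set \<Rightarrow> ('v \<Rightarrow> complex \<times> real) \<Rightarrow> real \<Rightarrow> real \<Rightarrow> 'v \<Rightarrow> real" where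
  "eta V P r1 r2 v = (if v \<in> Vrel V P r1 r2 then min 1 (2 * snd (P v) / (r2 - r1)) else 0)"

lemma eta_nonneg: "r1 < r2 \<Longrightarrow> \<forall>v\<in>V. snd (P v) > 0 \<Longrightarrow> v \<in> V \<Longrightarrow> eta V P r1 r2 v \<ge> 0"
  unfolding eta_def by auto

lemma admissible:
  assumes G: "graph V E" and R: "realizes V E \<Theta> P"
    and r: "0 < r1" "r1 < r2"
    and g: "\<gamma> \<in> joining_paths V E (V_circ V P r1) (V_circ V P r2)"
  shows "vm_length (eta V P r1 r2) \<gamma> \<ge> 1"
proof -
  let ?\<eta> = "eta V P r1 r2"
  let ?D = "\<lambda>v. disk (P v)"
  have rpos: "\<forall>v\<in>V. snd (P v) > 0" using R unfolding realizes_def by auto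
  have iff: "\<And>u v. u \<in> V \<Longrightarrow> v \<in> V \<Longrightarrow> u \<noteq> v \<Longrightarrow>
      (?D u \<inter> ?D v \<noteq> {}) \<longleftrightarrow> {u, v} \<in> tilde_E V E \<Theta>"
    using R unfolding realizes_def by blast
  obtain xs where xs: "\<gamma> = set xs" "xs \<noteq> []" "set xs \<subseteq> V"
    "\<forall>i. Suc i < length xs \<longrightarrow> {xs ! i, xs ! Suc i} \<in> E"
    "hd xs \<in> V_circ V P r1" "last xs \<in> V_circ V P r2"
    using g unfolding joining_paths_def by blast
  have nn: "\<And>v. v \<in> set xs \<Longrightarrow> ?\<eta> v \<ge> 0" using eta_nonneg[OF r(2) rpos] xs(3) by blast
  have len: "vm_length ?\<eta> \<gamma> = ennreal (\<Sum>v\<in>set xs. ?\<eta> v)"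
    unfolding vm_length_def xs(1) using nn by (simp add: sum_ennreal)
  have "(\<Sum>v\<in>set xs. ?\<eta> v) \<ge> 1"
  proof (cases "\<exists>v\<in>set xs \<inter> Vrel V P r1 r2. 2 * snd (P v) \<ge> r2 - r1")
    case True
    then obtain v where v: "v \<in> set xs" "v \<in> Vrel V P r1 r2" "2 * snd (P v) \<ge> r2 - r1" by blast
    have "?\<eta> v = 1" using v r unfolding eta_def by auto
    moreover have "?\<eta> v \<le> (\<Sum>v\<in>set xs. ?\<eta> v)" by (rule member_le_sum) (use v nn in auto)
    ultimately show ?thesis by simp
  next
    case False
    let ?T = "set xs \<inter> Vrel V P r1 r2"
    have eqT: "\<And>v. v \<in> ?T \<Longrightarrow> ?\<eta> v = 2 * snd (P v) / (r2 - r1)"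
      using False r unfolding eta_def by (auto simp: min_def field_simps)
    have conn: "connected (\<Union>v\<in>set xs. ?D v)"
    proof (rule chain_connected[OF xs(2)])
      show "\<forall>v\<in>set xs. connected (?D v)" by (simp add: disk_def)
      show "\<forall>i. Suc i < length xs \<longrightarrow> ?D (xs ! i) \<inter> ?D (xs ! Suc i) \<noteq> {}"
      proof (intro allI impI)
        fix i assume i: "Suc i < length xs"
        have in1: "xs ! i \<in> V" "xs ! Suc i \<in> V" using i xs(3) by (meson Suc_lessD nth_mem subsetD)+
        show "?D (xs ! i) \<inter> ?D (xs ! Suc i) \<noteq> {}"
        proof (cases "xs ! i = xs ! Suc i")
          case True
          have "fst (P (xs ! i)) \<in> ?D (xs ! i)" using rpos in1 by (auto simp: disk_def)
          thus ?thesis using True by auto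
        next
          case False
          have "{xs ! i, xs ! Suc i} \<in> tilde_E V E \<Theta>" using xs(4) i by (auto simp: tilde_E_def)
          thus ?thesis using iff[OF in1 False] by blast
        qed
      qed
    qed
    let ?N = "norm ` (\<Union>v\<in>set xs. ?D v)"
    have cN: "connected ?N"
      by (rule connected_continuous_image[OF continuous_on_norm_id conn])
    have "hd xs \<in> set xs" "last xs \<in> set xs" using xs(2) by auto
    hence r1N: "r1 \<in> ?N" and r2N: "r2 \<in> ?N" using xs(5,6) unfolding V_circ_def by force+
    have cov: "{r1..r2} \<subseteq> (\<Union>v\<in>?T. {norm (fst (P v)) - snd (P v) .. norm (fst (P v)) + snd (P v)})"
    proof
      fix t assume t: "t \<in> {r1..r2}"
      hence "t \<in> ?N" using cN r1N r2N unfolding connected_iff_interval by auto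
      then obtain v z where vz: "v \<in> set xs" "z \<in> ?D v" "t = norm z" by auto
      have "v \<in> Vrel V P r1 r2" using vz t xs(3) unfolding Vrel_def by auto
      moreover have "dist (fst (P v)) z \<le> snd (P v)" using vz(2) by (simp add: disk_def)
      hence "\<bar>norm z - norm (fst (P v))\<bar> \<le> snd (P v)"
        by (smt (verit) dist_norm norm_triangle_ineq2 norm_triangle_ineq3 norm_minus_commute)
      ultimately show "t \<in> (\<Union>v\<in>?T. {norm (fst (P v)) - snd (P v) .. norm (fst (P v)) + snd (P v)})"
        using vz by (intro UN_I[of v]) auto
    qed
    have "r2 - r1 \<le> (\<Sum>v\<in>?T. (norm (fst (P v)) + snd (P v)) - (norm (fst (P v)) - snd (P v)))"
      by (rule cover_len[OF _ _ cov]) (use r rpos xs(3) in \<open>auto simp: less_imp_le subset_iff\<close>)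
    also have "\<dots> = (\<Sum>v\<in>?T. 2 * snd (P v))" by simp
    finally have w: "r2 - r1 \<le> (\<Sum>v\<in>?T. 2 * snd (P v))" .
    have "(\<Sum>v\<in>?T. ?\<eta> v) = (\<Sum>v\<in>?T. 2 * snd (P v)) / (r2 - r1)"
      using eqT by (simp add: sum_divide_distrib)
    also have "\<dots> \<ge> 1" using w r by simp
    finally have "1 \<le> (\<Sum>v\<in>?T. ?\<eta> v)" .
    also have "\<dots> \<le> (\<Sum>v\<in>set xs. ?\<eta> v)" by (rule sum_mono2) (use nn in auto)
    finally show ?thesis .
  qed
  thus ?thesis unfolding len by simp
qed


lemma subdisk:
  fixes c z y :: complex
  assumes rho: "\<rho> > 0" and s: "0 < s" "s \<le> \<rho>" and z: "dist c z \<le> \<rho>"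
    and y: "dist (z + of_real (s/\<rho>) * (c - z)) y \<le> s"
  shows "dist c y \<le> \<rho>" "norm y \<le> norm z + 2 * s"
proof -
  define k where "k = s / \<rho>"
  have k: "0 < k" "k \<le> 1" using rho s unfolding k_def by auto
  have nz: "norm (c - z) \<le> \<rho>" using z by (simp add: dist_norm)
  have e1: "c - (z + of_real k * (c - z)) = of_real (1 - k) * (c - z)" by (simp add: algebra_simps)
  have "dist c (z + of_real k * (c - z)) = (1 - k) * norm (c - z)"
  proof -
    have "norm (of_real (1 - k) :: complex) = 1 - k" using k by (simp only: norm_of_real)
    thus ?thesis unfolding dist_norm e1 norm_mult by simp
  qed
  also have "\<dots> \<le> (1 - k) * \<rho>" using k nz by (intro mult_left_mono) auto
  also have "\<dots> = \<rho> - s" using rho unfolding k_def by (simp add: field_simps)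
  finally have d1: "dist c (z + of_real k * (c - z)) \<le> \<rho> - s" .
  show "dist c y \<le> \<rho>" using dist_triangle[of c y "z + of_real k * (c - z)"] d1 y
    unfolding k_def by linarith
  have "norm (of_real k * (c - z)) = k * norm (c - z)" using k by (simp add: norm_mult)
  also have "\<dots> \<le> k * \<rho>" using k nz by (intro mult_left_mono) auto
  also have "\<dots> = s" using rho unfolding k_def by simp
  finally have d2: "norm (of_real k * (c - z)) \<le> s" .
  have "norm y \<le> norm (z + of_real k * (c - z)) + dist (z + of_real k * (c - z)) y"
    by (metis dist_norm norm_minus_commute norm_triangle_sub)
  also have "\<dots> \<le> norm z + norm (of_real k * (c - z)) + dist (z + of_real k * (c - z)) y"
    using norm_triangle_ineq by simp
  finally show "norm y \<le> norm z + 2 * s" using d2 y unfolding k_def by linarith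
qed



lemma area_sum:
  assumes Th: "\<forall>e\<in>E. 0 \<le> \<Theta> e \<and> \<Theta> e \<le> pi / 2"
    and R: "realizes V E \<Theta> P" and r: "0 < r1" "r1 < r2"
    and F: "finite F" "F \<subseteq> V"
  shows "(\<Sum>v\<in>F. (eta V P r1 r2 v)\<^sup>2) \<le> 64 * r2\<^sup>2 / (r2 - r1)\<^sup>2"
proof -
  define w where "w = r2 - r1"
  have w: "w > 0" "w \<le> r2" using r unfolding w_def by auto
  define s where "s v = min (snd (P v)) (w/2)" for v
  define F' where "F' = F \<inter> Vrel V P r1 r2"
  have fin': "finite F'" using F unfolding F'_def by auto
  have rpos: "\<forall>v\<in>V. snd (P v) > 0" using R unfolding realizes_def by auto
  have eta_eq: "eta V P r1 r2 v = 2 * s v / w" if "v \<in> Vrel V P r1 r2" for v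
    using that w unfolding eta_def s_def w_def[symmetric] by (auto simp: min_def field_simps)
  have "(\<Sum>v\<in>F. (eta V P r1 r2 v)\<^sup>2) = (\<Sum>v\<in>F. if v \<in> Vrel V P r1 r2 then (2 * s v / w)\<^sup>2 else 0)"
    using eta_eq by (intro sum.cong) (auto simp: eta_def)
  also have "\<dots> = (\<Sum>v\<in>F'. (2 * s v / w)\<^sup>2)"
    unfolding F'_def Int_def by (rule sum.inter_filter[OF F(1), symmetric])
  also have "\<dots> = 4 / w\<^sup>2 * (\<Sum>v\<in>F'. (s v)\<^sup>2)"
    by (simp add: sum_distrib_left power_divide power_mult_distrib)
  finally have eq1: "(\<Sum>v\<in>F. (eta V P r1 r2 v)\<^sup>2) = 4 / w\<^sup>2 * (\<Sum>v\<in>F'. (s v)\<^sup>2)" .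
  define zz where "zz v = (SOME z. z \<in> disk (P v) \<and> r1 \<le> norm z \<and> norm z \<le> r2)" for v
  define cc where "cc v = zz v + of_real (s v / snd (P v)) * (fst (P v) - zz v)" for v
  define S where "S v = cball (cc v) (s v)" for v
  have props: "S v \<subseteq> disk (P v) \<and> S v \<subseteq> cball 0 (2 * r2) \<and> s v > 0" if v: "v \<in> F'" for v
  proof -
    have vV: "v \<in> V" and vR: "v \<in> Vrel V P r1 r2" using v F unfolding F'_def by auto
    have ex: "\<exists>z. z \<in> disk (P v) \<and> r1 \<le> norm z \<and> norm z \<le> r2" using vR unfolding Vrel_def by auto
    have zz: "zz v \<in> disk (P v)" "norm (zz v) \<le> r2"
      using someI_ex[OF ex] unfolding zz_def by auto
    have rho: "snd (P v) > 0" using rpos vV by auto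
    have sp: "s v > 0" "s v \<le> snd (P v)" "s v \<le> w / 2" using rho w unfolding s_def by auto
    have dz: "dist (fst (P v)) (zz v) \<le> snd (P v)" using zz(1) by (simp add: disk_def)
    have "S v \<subseteq> disk (P v)"
    proof
      fix y assume "y \<in> S v"
      hence "dist (cc v) y \<le> s v" unfolding S_def by simp
      hence "dist (fst (P v)) y \<le> snd (P v)" using subdisk(1)[OF rho sp(1,2) dz] unfolding cc_def by blast
      thus "y \<in> disk (P v)" by (simp add: disk_def)
    qed
    moreover have "S v \<subseteq> cball 0 (2 * r2)"
    proof
      fix y assume "y \<in> S v"
      hence "dist (cc v) y \<le> s v" unfolding S_def by simp
      hence "norm y \<le> norm (zz v) + 2 * s v" using subdisk(2)[OF rho sp(1,2) dz] unfolding cc_def by blast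
      thus "y \<in> cball 0 (2 * r2)" using zz(2) sp(3) w by simp
    qed
    ultimately show ?thesis using sp by blast
  qed
  have "(\<Sum>v\<in>F'. emeasure lborel (S v)) \<le> 4 * emeasure lborel (cball (0::complex) (2 * r2))"
  proof (rule area_bound[OF fin'])
    show "\<And>v. v \<in> F' \<Longrightarrow> S v \<subseteq> cball 0 (2 * r2)" using props by blast
    show "\<And>v. v \<in> F' \<Longrightarrow> closed (S v)" unfolding S_def by simp
    fix x
    have "{v \<in> F'. x \<in> S v} \<subseteq> {v \<in> F. x \<in> disk (P v)}" using props unfolding F'_def by blast
    hence "card {v \<in> F'. x \<in> S v} \<le> card {v \<in> F. x \<in> disk (P v)}" using F(1) by (intro card_mono) auto
    also have "\<dots> \<le> 4" by (rule multiplicity[OF Th R F(2)])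
    finally show "card {v \<in> F'. x \<in> S v} \<le> 4" .
  qed
  also have "\<dots> = ennreal (16 * pi * r2\<^sup>2)"
  proof -
    have "emeasure lborel (cball (0::complex) (2 * r2)) = ennreal (pi * (2 * r2)\<^sup>2)"
      using r by (intro emeasure_cball_complex) simp
    moreover have "ennreal (16 * pi * r2\<^sup>2) = ennreal 4 * ennreal (pi * (2 * r2)\<^sup>2)"
    proof -
      have "16 * pi * r2\<^sup>2 = 4 * (pi * (2 * r2)\<^sup>2)" by (simp add: power_mult_distrib)
      thus ?thesis using ennreal_mult[of 4 "pi * (2 * r2)\<^sup>2"] by (simp add: mult.assoc)
    qed
    ultimately have "4 * emeasure lborel (cball (0::complex) (2 * r2)) = ennreal (16 * pi * r2\<^sup>2)"
      by simp
    thus ?thesis .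
  qed
  finally have m: "(\<Sum>v\<in>F'. emeasure lborel (S v)) \<le> ennreal (16 * pi * r2\<^sup>2)" .
  have "(\<Sum>v\<in>F'. emeasure lborel (S v)) = (\<Sum>v\<in>F'. ennreal (pi * (s v)\<^sup>2))"
  proof (rule sum.cong[OF refl])
    fix v assume "v \<in> F'"
    hence "s v > 0" using props by blast
    thus "emeasure lborel (S v) = ennreal (pi * (s v)\<^sup>2)"
      unfolding S_def by (intro emeasure_cball_complex) simp
  qed
  also have "\<dots> = ennreal (\<Sum>v\<in>F'. pi * (s v)\<^sup>2)" by (rule sum_ennreal) simp
  finally have "ennreal (\<Sum>v\<in>F'. pi * (s v)\<^sup>2) \<le> ennreal (16 * pi * r2\<^sup>2)" using m by simp
  hence "(\<Sum>v\<in>F'. pi * (s v)\<^sup>2) \<le> 16 * pi * r2\<^sup>2" by (simp add: ennreal_le_iff)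
  moreover have "(\<Sum>v\<in>F'. pi * (s v)\<^sup>2) = pi * (\<Sum>v\<in>F'. (s v)\<^sup>2)"
    by (rule sum_distrib_left[symmetric])
  moreover have "16 * pi * r2\<^sup>2 = pi * (16 * r2\<^sup>2)" by simp
  ultimately have "pi * (\<Sum>v\<in>F'. (s v)\<^sup>2) \<le> pi * (16 * r2\<^sup>2)" by linarith
  hence s16: "(\<Sum>v\<in>F'. (s v)\<^sup>2) \<le> 16 * r2\<^sup>2" by simp
  have "4 / w\<^sup>2 * (\<Sum>v\<in>F'. (s v)\<^sup>2) \<le> 4 / w\<^sup>2 * (16 * r2\<^sup>2)"
    using s16 w by (intro mult_left_mono) auto
  also have "\<dots> = 64 * r2\<^sup>2 / w\<^sup>2" by simp
  finally show ?thesis using eq1 unfolding w_def by simp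
qed



theorem lemma5p3:
  fixes V :: "'v set" and E :: "'v set set" and \<Theta> :: "'v set \<Rightarrow> real"
    and P :: "'v \<Rightarrow> complex \<times> real" and r1 r2 :: real
  assumes "graph V E"
    and "\<forall>e\<in>E. 0 \<le> \<Theta> e \<and> \<Theta> e \<le> pi / 2"
    and "realizes V E \<Theta> P"
    and "0 < r1" and "r1 < r2"
  shows "VEL_sets V E (V_circ V P r1) (V_circ V P r2)
           \<ge> ennreal ((r2 - r1)\<^sup>2 / ((32 + (8 * pi)\<^sup>2) * r2\<^sup>2))
       \<and> (2 * r1 \<le> r2 \<longrightarrow>
           VEL_sets V E (V_circ V P r1) (V_circ V P r2) \<ge> ennreal (1 / (128 + (16 * pi)\<^sup>2)))"
proof -
  define M where "M = 64 * r2\<^sup>2 / (r2 - r1)\<^sup>2"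
  have Mpos: "M > 0" using assms(4,5) unfolding M_def by simp
  have rpos: "\<forall>v\<in>V. snd (P v) > 0" using assms(3) unfolding realizes_def by auto
  have adm: "\<forall>\<gamma>\<in>joining_paths V E (V_circ V P r1) (V_circ V P r2). vm_length (eta V P r1 r2) \<gamma> \<ge> 1"
    using admissible[OF assms(1) assms(3) assms(4,5)] by blast
  have nn: "\<forall>v\<in>V. eta V P r1 r2 v \<ge> 0" using eta_nonneg[OF assms(5) rpos] by blast
  have area: "vm_area V (eta V P r1 r2) \<le> ennreal M"
    unfolding vm_area_def
  proof (rule infsum_le_finite_sums)
    show "(\<lambda>v. ennreal ((eta V P r1 r2 v)\<^sup>2)) summable_on V" by (simp add: nonneg_summable_on_complete)
    fix F assume F: "finite F" "F \<subseteq> V"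
    have "(\<Sum>v\<in>F. ennreal ((eta V P r1 r2 v)\<^sup>2)) = ennreal (\<Sum>v\<in>F. (eta V P r1 r2 v)\<^sup>2)"
      by (rule sum_ennreal) simp
    also have "\<dots> \<le> ennreal M" unfolding M_def
      by (rule ennreal_leI, rule area_sum[OF assms(2) assms(3) assms(4,5) F])
    finally show "(\<Sum>v\<in>F. ennreal ((eta V P r1 r2 v)\<^sup>2)) \<le> ennreal M" .
  qed
  have "MOD V (joining_paths V E (V_circ V P r1) (V_circ V P r2)) \<le> ennreal M"
    using MOD_le[OF nn adm] area by (rule order_trans)
  hence vel: "ennreal (1 / M) \<le> VEL_sets V E (V_circ V P r1) (V_circ V P r2)"
    unfolding VEL_sets_def using Mpos by (rule VEL_ge)
  have invM: "1 / M = (r2 - r1)\<^sup>2 / (64 * r2\<^sup>2)" unfolding M_def by simp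
  have pi1: "pi \<ge> 1" using pi_gt3 by simp
  have "(8 * pi)\<^sup>2 \<ge> 64" using pi1 by (simp add: power_mult_distrib)
  hence "64 * r2\<^sup>2 \<le> (32 + (8 * pi)\<^sup>2) * r2\<^sup>2" by (intro mult_right_mono) auto
  hence "(r2 - r1)\<^sup>2 / ((32 + (8 * pi)\<^sup>2) * r2\<^sup>2) \<le> (r2 - r1)\<^sup>2 / (64 * r2\<^sup>2)"
    using assms(4,5) by (intro divide_left_mono) auto
  hence p1: "ennreal ((r2 - r1)\<^sup>2 / ((32 + (8 * pi)\<^sup>2) * r2\<^sup>2)) \<le> VEL_sets V E (V_circ V P r1) (V_circ V P r2)"
    using vel invM by (metis ennreal_leI order_trans)
  have p2: "ennreal (1 / (128 + (16 * pi)\<^sup>2)) \<le> VEL_sets V E (V_circ V P r1) (V_circ V P r2)"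
    if h: "2 * r1 \<le> r2"
  proof -
    have "r2 / 2 \<le> r2 - r1" using h by simp
    hence "(r2 / 2)\<^sup>2 \<le> (r2 - r1)\<^sup>2" using assms(4,5) by (intro power_mono) auto
    hence a: "r2\<^sup>2 / 4 \<le> (r2 - r1)\<^sup>2" by (simp add: power_divide)
    have "1 / 256 \<le> (r2 - r1)\<^sup>2 / (64 * r2\<^sup>2)"
      using a assms(4,5) by (simp add: field_simps)
    moreover have "(16 * pi)\<^sup>2 \<ge> 256" using pi1 by (simp add: power_mult_distrib)
    hence "1 / (128 + (16 * pi)\<^sup>2) \<le> 1 / 256" by (intro divide_left_mono) auto
    ultimately have "1 / (128 + (16 * pi)\<^sup>2) \<le> 1 / M" using invM by linarith
    thus ?thesis using vel by (metis ennreal_leI order_trans)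
  qed
  show ?thesis using p1 p2 by blast
qed


end
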